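(* Consider a zero-one knapsack instance with $n$ items, integer capacity $W>0$, positive integer weights $w_i$ and integer profits $v_i$, and let $\mathcal{S}^*$ be its set of optimal solutions. Let $V(i,w)$, $C(i,w)$ be the tables defined by: $V(0,w)=0$, $C(0,w)=1$ for $0\le w\le W$; $V(i,w)=-\infty$, $C(i,w)=0$ for $w<0$; and for $1\le i\le n$, $0\le w\le W$, $V(i,w)=\max\{V(i-1,w),V(i-1,w-w_i)+v_i\}$ and $C(i,w)=C(i-1,w)+C(i-1,w-w_i)$ if $V(i-1,w)=V(i-1,w-w_i)+v_i$, $C(i,w)=C(i-1,w)$ if $V(i-1,w)>V(i-1,w-w_i)+v_i$, and $C(i,w)=C(i-1,w-w_i)$ otherwise. Consider the following randomized sampling procedure: start with $L=\emptyset$, $i=n$, $w=W$; while $i>0$ and $w>0$: if $w_i\le w$ and $V(i,w)=V(i-1,w)=V(i-1,w-w_i)+v_i$, then with probability $q=C(i-1,w-w_i)/C(i,w)$ (using a fresh uniform random number $r\in[0,1]$ and testing $r<q$) add $i$ to $L$ and set $w\leftarrow w-w_i$; else if $V(i,w)>V(i-1,w)$, add $i$ to $L$ and set $w\leftarrow w-w_i$; in all cases then set $i\leftarrow i-1$. Output $L$. Then for every $s\in\mathcal{S}^*$, the probability that the procedure outputs $s$ is $1/|\mathcal{S}^*|$.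
   Context: For $s\subseteq[n]=\{1,\dots,n\}$ let $w(s)=\sum_{i\in s}w_i$ and $v(s)=\sum_{i\in s}v_i$. The set of feasible solutions is $\mathcal{S}=\{s\subseteq[n]: w(s)\le W\}$, $v_{\max}=\max_{s\in\mathcal{S}}v(s)$, and $\mathcal{S}^*=\{s\in\mathcal{S}: v(s)=v_{\max}\}$. *)

theory Defs
  imports "HOL-Probability.Probability_Mass_Function" "HOL-Library.Extended_Real"
begin

definition feasible :: "nat \<Rightarrow> (nat \<Rightarrow> int) \<Rightarrow> int \<Rightarrow> nat set set" where
  "feasible n wt W = {s. s \<subseteq> {1..n} \<and> (\<Sum>i\<in>s. wt i) \<le> W}"

definition vmax :: "nat \<Rightarrow> (nat \<Rightarrow> int) \<Rightarrow> (nat \<Rightarrow> int) \<Rightarrow> int \<Rightarrow> int" where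
  "vmax n wt val W = Max ((\<lambda>s. \<Sum>i\<in>s. val i) ` feasible n wt W)"

definition opt_sols :: "nat \<Rightarrow> (nat \<Rightarrow> int) \<Rightarrow> (nat \<Rightarrow> int) \<Rightarrow> int \<Rightarrow> nat set set" where
  "opt_sols n wt val W = {s \<in> feasible n wt W. (\<Sum>i\<in>s. val i) = vmax n wt val W}"

primrec Vtab :: "(nat \<Rightarrow> int) \<Rightarrow> (nat \<Rightarrow> int) \<Rightarrow> nat \<Rightarrow> int \<Rightarrow> ereal" where
  "Vtab wt val 0 w = (if w < 0 then -\<infinity> else 0)"
| "Vtab wt val (Suc i) w = (if w < 0 then -\<infinity> else
     max (Vtab wt val i w) (Vtab wt val i (w - wt (Suc i)) + ereal (real_of_int (val (Suc i)))))"

primrec Ctab :: "(nat \<Rightarrow> int) \<Rightarrow> (nat \<Rightarrow> int) \<Rightarrow> nat \<Rightarrow> int \<Rightarrow> nat" where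
  "Ctab wt val 0 w = (if w < 0 then 0 else 1)"
| "Ctab wt val (Suc i) w = (if w < 0 then 0 else
     (let a = Vtab wt val i w;
          b = Vtab wt val i (w - wt (Suc i)) + ereal (real_of_int (val (Suc i)))
      in if a = b then Ctab wt val i w + Ctab wt val i (w - wt (Suc i))
         else if a > b then Ctab wt val i w
         else Ctab wt val i (w - wt (Suc i))))"

text \<open>The test "r < q" with r uniform
  on [0,1] is modelled by a Bernoulli(q) coin.\<close>
primrec sampler :: "(nat \<Rightarrow> int) \<Rightarrow> (nat \<Rightarrow> int) \<Rightarrow> nat \<Rightarrow> int \<Rightarrow> nat set pmf" where
  "sampler wt val 0 w = return_pmf {}"
| "sampler wt val (Suc i) w =
     (if w \<le> 0 then return_pmf {}
      else if wt (Suc i) \<le> w \<and> Vtab wt val (Suc i) w = Vtab wt val i w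
              \<and> Vtab wt val i w = Vtab wt val i (w - wt (Suc i)) + ereal (real_of_int (val (Suc i)))
      then bind_pmf (bernoulli_pmf (real (Ctab wt val i (w - wt (Suc i))) / real (Ctab wt val (Suc i) w)))
             (\<lambda>b. if b then map_pmf (insert (Suc i)) (sampler wt val i (w - wt (Suc i)))
                  else sampler wt val i w)
      else if Vtab wt val (Suc i) w > Vtab wt val i w
      then map_pmf (insert (Suc i)) (sampler wt val i (w - wt (Suc i)))
      else sampler wt val i w)"

end

theory Submission
  imports Defs
begin

definition optset :: "(nat \<Rightarrow> int) \<Rightarrow> (nat \<Rightarrow> int) \<Rightarrow> nat \<Rightarrow> int \<Rightarrow> nat set set" where
  "optset wt val i w = {s. s \<subseteq> {1..i} \<and> (\<Sum>j\<in>s. wt j) \<le> w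
     \<and> ereal (real_of_int (\<Sum>j\<in>s. val j)) = Vtab wt val i w}"

lemma Vtab_neg: "w < 0 \<Longrightarrow> Vtab wt val i w = -\<infinity>"
  by (cases i) auto

lemma wsum_nonneg:
  fixes wt :: "nat \<Rightarrow> int"
  assumes "\<forall>j\<in>{1..i}. wt j > 0" "t \<subseteq> {1..i}"
  shows "(\<Sum>j\<in>t. wt j) \<ge> 0"
proof (rule sum_nonneg)
  fix x assume "x \<in> t"
  then have "x \<in> {1..i}" using assms(2) by blast
  then show "wt x \<ge> 0" using assms(1) less_imp_le by blast
qed

lemma wsum_zero:
  fixes wt :: "nat \<Rightarrow> int"
  assumes "\<forall>j\<in>{1..i}. wt j > 0" "t \<subseteq> {1..i}" "(\<Sum>j\<in>t. wt j) \<le> 0"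
  shows "t = {}"
proof (rule ccontr)
  assume "t \<noteq> {}"
  moreover have "finite t" using assms(2) finite_subset by blast
  ultimately have "(\<Sum>j\<in>t. wt j) > 0" using assms(1,2) by (intro sum_pos) auto
  with assms(3) show False by simp
qed

lemma A1:
  assumes "\<forall>j\<in>{1..i}. wt j > 0" "t \<subseteq> {1..i}" "(\<Sum>j\<in>t. wt j) \<le> w"
  shows "ereal (real_of_int (\<Sum>j\<in>t. val j)) \<le> Vtab wt val i w"
  using assms
proof (induction i arbitrary: t w)
  case 0
  then show ?case by auto
next
  case (Suc i)
  have w0: "w \<ge> 0" using wsum_nonneg[OF Suc.prems(1,2)] Suc.prems(3) by linarith
  have posi: "\<forall>j\<in>{1..i}. wt j > 0" using Suc.prems(1) by auto
  have fin: "finite t" using Suc.prems(2) finite_subset by blast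
  show ?case
  proof (cases "Suc i \<in> t")
    case False
    then have ti: "t \<subseteq> {1..i}" using Suc.prems(2) by (auto simp: le_Suc_eq)
    have V: "Vtab wt val (Suc i) w = max (Vtab wt val i w)
      (Vtab wt val i (w - wt (Suc i)) + ereal (real_of_int (val (Suc i))))" using w0 by simp
    from Suc.IH[OF posi ti Suc.prems(3)] show ?thesis unfolding V
      using max.cobounded1 order_trans by blast
  next
    case True
    define t' where "t' = t - {Suc i}"
    have t': "t' \<subseteq> {1..i}" using Suc.prems(2) by (auto simp: t'_def le_Suc_eq)
    have sw: "(\<Sum>j\<in>t. wt j) = wt (Suc i) + (\<Sum>j\<in>t'. wt j)"
      unfolding t'_def using True fin by (simp add: sum.remove)
    have sv: "(\<Sum>j\<in>t. val j) = val (Suc i) + (\<Sum>j\<in>t'. val j)"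
      unfolding t'_def using True fin by (simp add: sum.remove)
    have "ereal (real_of_int (\<Sum>j\<in>t'. val j)) \<le> Vtab wt val i (w - wt (Suc i))"
      using Suc.IH[OF posi t'] Suc.prems(3) sw by simp
    then have "ereal (real_of_int (\<Sum>j\<in>t'. val j)) + ereal (real_of_int (val (Suc i)))
       \<le> Vtab wt val i (w - wt (Suc i)) + ereal (real_of_int (val (Suc i)))"
      by (rule add_right_mono)
    moreover have "ereal (real_of_int (\<Sum>j\<in>t. val j)) = ereal (real_of_int (\<Sum>j\<in>t'. val j)) + ereal (real_of_int (val (Suc i)))"
      using sv by simp
    moreover have V: "Vtab wt val (Suc i) w = max (Vtab wt val i w)
      (Vtab wt val i (w - wt (Suc i)) + ereal (real_of_int (val (Suc i))))" using w0 by simp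
    ultimately show ?thesis unfolding V
      using max.cobounded2 order_trans by metis
  qed
qed

lemma A2:
  assumes "\<forall>j\<in>{1..i}. wt j > 0" "w \<ge> 0"
  shows "\<exists>t. t \<subseteq> {1..i} \<and> (\<Sum>j\<in>t. wt j) \<le> w \<and> ereal (real_of_int (\<Sum>j\<in>t. val j)) = Vtab wt val i w"
  using assms
proof (induction i arbitrary: w)
  case 0
  then show ?case by (intro exI[of _ "{}"]) auto
next
  case (Suc i)
  have posi: "\<forall>j\<in>{1..i}. wt j > 0" using Suc.prems(1) by auto
  let ?a = "Vtab wt val i w"
  let ?b = "Vtab wt val i (w - wt (Suc i)) + ereal (real_of_int (val (Suc i)))"
  show ?case
  proof (cases "?b \<le> ?a")
    case True
    obtain t where t: "t \<subseteq> {1..i}" "(\<Sum>j\<in>t. wt j) \<le> w" "ereal (real_of_int (\<Sum>j\<in>t. val j)) = ?a"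
      using Suc.IH[OF posi Suc.prems(2)] by blast
    have V: "Vtab wt val (Suc i) w = ?a" using Suc.prems(2) True by (simp add: max_absorb1)
    show ?thesis using t V by (intro exI[of _ t]) auto
  next
    case False
    have ww: "w - wt (Suc i) \<ge> 0"
    proof (rule ccontr)
      assume "\<not> w - wt (Suc i) \<ge> 0"
      then have "Vtab wt val i (w - wt (Suc i)) = -\<infinity>" by (intro Vtab_neg) simp
      then have "?b = -\<infinity>" by simp
      then have "?b \<le> ?a" by simp
      with False show False by blast
    qed
    obtain t where t: "t \<subseteq> {1..i}" "(\<Sum>j\<in>t. wt j) \<le> w - wt (Suc i)"
      "ereal (real_of_int (\<Sum>j\<in>t. val j)) = Vtab wt val i (w - wt (Suc i))"
      using Suc.IH[OF posi ww] by blast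
    have nt: "Suc i \<notin> t" using t(1) by auto
    have fin: "finite t" using t(1) finite_subset by blast
    show ?thesis
    proof (intro exI[of _ "insert (Suc i) t"] conjI)
      show "insert (Suc i) t \<subseteq> {1..Suc i}" using t(1) by auto
      show "(\<Sum>j\<in>insert (Suc i) t. wt j) \<le> w" using nt fin t(2) by simp
      have "ereal (real_of_int (\<Sum>j\<in>insert (Suc i) t. val j)) = ?b"
        using nt fin t(3)[symmetric] by (simp add: add.commute)
      moreover have "Vtab wt val (Suc i) w = ?b" using False Suc.prems(2) by (simp add: max_absorb2)
      ultimately show "ereal (real_of_int (\<Sum>j\<in>insert (Suc i) t. val j)) = Vtab wt val (Suc i) w"
        by simp
    qed
  qed
qed

lemma optset_sub: "s \<in> optset wt val i w \<Longrightarrow> s \<subseteq> {1..i}"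
  unfolding optset_def by auto

lemma optset_neg:
  assumes "\<forall>j\<in>{1..i}. wt j > 0" "w < 0"
  shows "optset wt val i w = {}"
proof -
  have "\<not> (\<Sum>j\<in>s. wt j) \<le> w" if "s \<subseteq> {1..i}" for s
    using wsum_nonneg[OF assms(1) that] assms(2) by linarith
  then show ?thesis unfolding optset_def by blast
qed

lemma opt_char:
  assumes pos: "\<forall>j\<in>{1..Suc i}. wt j > 0" and w0: "w \<ge> 0"
  shows "s \<in> optset wt val (Suc i) w \<longleftrightarrow>
    (Suc i \<notin> s \<and> s \<in> optset wt val i w \<and> Vtab wt val i w = Vtab wt val (Suc i) w) \<or>
    (Suc i \<in> s \<and> s - {Suc i} \<in> optset wt val i (w - wt (Suc i)) \<and>
      Vtab wt val i (w - wt (Suc i)) + ereal (real_of_int (val (Suc i))) = Vtab wt val (Suc i) w)"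
  (is "?L \<longleftrightarrow> ?R1 \<or> ?R2")
proof -
  have posi: "\<forall>j\<in>{1..i}. wt j > 0" using pos by auto
  let ?a = "Vtab wt val i w"
  let ?b = "Vtab wt val i (w - wt (Suc i)) + ereal (real_of_int (val (Suc i)))"
  have V: "Vtab wt val (Suc i) w = max ?a ?b" using w0 by simp
  show ?thesis
  proof
    assume L: ?L
    then have sS: "s \<subseteq> {1..Suc i}" and sw: "(\<Sum>j\<in>s. wt j) \<le> w"
      and sv: "ereal (real_of_int (\<Sum>j\<in>s. val j)) = Vtab wt val (Suc i) w"
      unfolding optset_def by auto
    have fin: "finite s" using sS finite_subset by blast
    show "?R1 \<or> ?R2"
    proof (cases "Suc i \<in> s")
      case False
      then have si: "s \<subseteq> {1..i}" using sS by (auto simp: le_Suc_eq)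
      have "ereal (real_of_int (\<Sum>j\<in>s. val j)) \<le> ?a" by (rule A1[OF posi si sw])
      then have "?a = Vtab wt val (Suc i) w" using sv V
        by (metis antisym max.cobounded1)
      then have ?R1 using False si sw sv unfolding optset_def by auto
      then show ?thesis by blast
    next
      case True
      define t where "t = s - {Suc i}"
      have ti: "t \<subseteq> {1..i}" using sS by (auto simp: t_def le_Suc_eq)
      have sw2: "(\<Sum>j\<in>s. wt j) = wt (Suc i) + (\<Sum>j\<in>t. wt j)"
        unfolding t_def using True fin by (simp add: sum.remove)
      have sv2: "(\<Sum>j\<in>s. val j) = val (Suc i) + (\<Sum>j\<in>t. val j)"
        unfolding t_def using True fin by (simp add: sum.remove)
      have tw: "(\<Sum>j\<in>t. wt j) \<le> w - wt (Suc i)" using sw sw2 by simp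
      have le: "ereal (real_of_int (\<Sum>j\<in>t. val j)) \<le> Vtab wt val i (w - wt (Suc i))"
        by (rule A1[OF posi ti tw])
      then have "ereal (real_of_int (\<Sum>j\<in>t. val j)) + ereal (real_of_int (val (Suc i))) \<le> ?b"
        by (rule add_right_mono)
      moreover have es: "ereal (real_of_int (\<Sum>j\<in>s. val j)) = ereal (real_of_int (\<Sum>j\<in>t. val j)) + ereal (real_of_int (val (Suc i)))"
        using sv2 by simp
      ultimately have bM: "?b = Vtab wt val (Suc i) w" using sv V
        by (metis antisym max.cobounded2)
      then have "Vtab wt val i (w - wt (Suc i)) + ereal (real_of_int (val (Suc i)))
          = ereal (real_of_int (\<Sum>j\<in>t. val j)) + ereal (real_of_int (val (Suc i)))"
        using sv es bM by metis
      then have "Vtab wt val i (w - wt (Suc i)) = ereal (real_of_int (\<Sum>j\<in>t. val j))"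
        by (cases "Vtab wt val i (w - wt (Suc i))") auto
      then have "t \<in> optset wt val i (w - wt (Suc i))" using ti tw unfolding optset_def by auto
      then have ?R2 using True bM by (simp add: t_def)
      then show ?thesis by blast
    qed
  next
    assume "?R1 \<or> ?R2"
    then show ?L
    proof
      assume R1: ?R1
      then show ?L unfolding optset_def by auto
    next
      assume R2: ?R2
      define t where "t = s - {Suc i}"
      have tin: "t \<in> optset wt val i (w - wt (Suc i))" using R2 by (simp add: t_def)
      then have ti: "t \<subseteq> {1..i}" and tw: "(\<Sum>j\<in>t. wt j) \<le> w - wt (Suc i)"
        and tv: "ereal (real_of_int (\<Sum>j\<in>t. val j)) = Vtab wt val i (w - wt (Suc i))"
        unfolding optset_def by auto
      have s_eq: "s = insert (Suc i) t" using R2 by (auto simp: t_def)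
      have nt: "Suc i \<notin> t" using ti by auto
      have fin: "finite t" using ti finite_subset by blast
      have "s \<subseteq> {1..Suc i}" using ti s_eq by auto
      moreover have "(\<Sum>j\<in>s. wt j) \<le> w" using s_eq nt fin tw by simp
      moreover have "ereal (real_of_int (\<Sum>j\<in>s. val j)) = ?b"
        using s_eq nt fin tv[symmetric] by (simp add: add.commute)
      ultimately show ?L using R2 unfolding optset_def by auto
    qed
  qed
qed

lemma optset_finite: "finite (optset wt val i w)"
proof -
  have "optset wt val i w \<subseteq> Pow {1..i}" using optset_sub by blast
  then show ?thesis by (rule finite_subset) simp
qed

lemma optset_nonempty:
  assumes "\<forall>j\<in>{1..i}. wt j > 0" "w \<ge> 0"
  shows "optset wt val i w \<noteq> {}"
  using A2[OF assms, of val] unfolding optset_def by blast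

lemma optset_zero:
  assumes "\<forall>j\<in>{1..i}. wt j > 0"
  shows "optset wt val i 0 = {{}}"
proof -
  have "s = {}" if "s \<in> optset wt val i 0" for s
    using that wsum_zero[OF assms] unfolding optset_def by blast
  with optset_nonempty[OF assms, of 0 val] show ?thesis by blast
qed

lemma img_char:
  assumes "\<And>t. t \<in> B \<Longrightarrow> k \<notin> t"
  shows "s \<in> insert k ` B \<longleftrightarrow> k \<in> s \<and> s - {k} \<in> B"
proof
  assume "s \<in> insert k ` B"
  then obtain t where "t \<in> B" "s = insert k t" by blast
  with assms show "k \<in> s \<and> s - {k} \<in> B" by auto
next
  assume "k \<in> s \<and> s - {k} \<in> B"
  then have "s = insert k (s - {k})" "s - {k} \<in> B" by auto
  then show "s \<in> insert k ` B" by blast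
qed

lemma card_split:
  assumes "finite A" "finite B" "\<And>t. t \<in> A \<Longrightarrow> k \<notin> t" "\<And>t. t \<in> B \<Longrightarrow> k \<notin> t"
  shows "card ((if P then A else {}) \<union> (if Q then insert k ` B else {}))
     = (if P then card A else 0) + (if Q then card B else 0)"
proof -
  have inj: "inj_on (insert k) B"
    unfolding inj_on_def using assms(4) insert_ident by metis
  have cB: "card (insert k ` B) = card B" using card_image[OF inj] .
  have disj: "(if P then A else {}) \<inter> (if Q then insert k ` B else {}) = {}"
    using assms(3) by auto
  have "card ((if P then A else {}) \<union> (if Q then insert k ` B else {}))
     = card (if P then A else {}) + card (if Q then insert k ` B else {})"
    by (rule card_Un_disjoint[OF _ _ disj]) (use assms(1,2) in auto)
  then show ?thesis using cB by simp
qed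

lemma optset_card:
  assumes "\<forall>j\<in>{1..i}. wt j > 0"
  shows "card (optset wt val i w) = Ctab wt val i w"
  using assms
proof (induction i arbitrary: w)
  case 0
  show ?case
  proof (cases "w < 0")
    case True
    then show ?thesis using optset_neg[OF 0] by simp
  next
    case False
    then have "optset wt val 0 w = {{}}" unfolding optset_def by auto
    then show ?thesis using False by simp
  qed
next
  case (Suc i)
  have posi: "\<forall>j\<in>{1..i}. wt j > 0" using Suc.prems by auto
  show ?case
  proof (cases "w < 0")
    case True
    then show ?thesis using optset_neg[OF Suc.prems] by simp
  next
    case False
    then have w0: "w \<ge> 0" by simp
    define a where "a = Vtab wt val i w"
    define b where "b = Vtab wt val i (w - wt (Suc i)) + ereal (real_of_int (val (Suc i)))"
    define M where "M = Vtab wt val (Suc i) w"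
    define A where "A = optset wt val i w"
    define B where "B = optset wt val i (w - wt (Suc i))"
    have V: "M = max a b" unfolding M_def a_def b_def using w0 by simp
    have nA: "Suc i \<notin> t" if "t \<in> A" for t using optset_sub[OF that[unfolded A_def]] by auto
    have nB: "Suc i \<notin> t" if "t \<in> B" for t using optset_sub[OF that[unfolded B_def]] by auto
    have oc: "s \<in> optset wt val (Suc i) w \<longleftrightarrow>
      (Suc i \<notin> s \<and> s \<in> A \<and> a = M) \<or> (Suc i \<in> s \<and> s - {Suc i} \<in> B \<and> b = M)" for s
      using opt_char[OF Suc.prems w0, of s val] unfolding a_def b_def M_def A_def B_def .
    have eq: "optset wt val (Suc i) w = (if a = M then A else {}) \<union> (if b = M then insert (Suc i) ` B else {})"
    proof (rule set_eqI)
      fix s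
      show "s \<in> optset wt val (Suc i) w \<longleftrightarrow> s \<in> (if a = M then A else {}) \<union> (if b = M then insert (Suc i) ` B else {})"
        using nA[of s] img_char[of B "Suc i" s, OF nB]
        by (cases "a = M"; cases "b = M"; simp add: oc; blast)
    qed
    have c: "card (optset wt val (Suc i) w) = (if a = M then card A else 0) + (if b = M then card B else 0)"
      unfolding eq by (rule card_split) (auto simp: A_def B_def optset_finite nA nB)
    have ctab: "Ctab wt val (Suc i) w = (if a = b then Ctab wt val i w + Ctab wt val i (w - wt (Suc i))
         else if a > b then Ctab wt val i w else Ctab wt val i (w - wt (Suc i)))"
      unfolding a_def b_def using w0 by (simp add: Let_def)
    have IH1: "card A = Ctab wt val i w" and IH2: "card B = Ctab wt val i (w - wt (Suc i))"
      unfolding A_def B_def using Suc.IH[OF posi] by auto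
    show ?thesis
    proof (cases "a = b")
      case True
      then have "M = a" "M = b" using V by auto
      then show ?thesis unfolding c ctab IH1 IH2 using True by simp
    next
      case ne: False
      show ?thesis
      proof (cases "a > b")
        case True
        then have "M = a" "M \<noteq> b" using V ne by (auto simp: max_def)
        then show ?thesis unfolding c ctab IH1 IH2 using True ne by simp
      next
        case False
        then have "M = b" "M \<noteq> a" using V ne by (auto simp: max_def)
        then show ?thesis unfolding c ctab IH1 IH2 using False ne by simp
      qed
    qed
  qed
qed

lemma pmf_map_insert:
  "pmf (map_pmf (insert k) M) s = (if k \<in> s then pmf M (s - {k}) + pmf M s else 0)"
proof (cases "k \<in> s")
  case True
  then have "insert k -` {s} = {s - {k}, s}" by auto
  moreover have "s - {k} \<noteq> s" using True by auto
  ultimately show ?thesis using True by (simp add: pmf_map measure_measure_pmf_finite)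
next
  case False
  then have "insert k -` {s} = {}" by auto
  then show ?thesis using False by (simp add: pmf_map)
qed

lemma Ctab_pos:
  assumes "\<forall>j\<in>{1..i}. wt j > 0" "w \<ge> 0"
  shows "Ctab wt val i w > 0"
  using optset_card[OF assms(1), of val w] optset_nonempty[OF assms, of val] optset_finite[of wt val i w]
  by (metis card_gt_0_iff)

lemma sampler_pmf:
  assumes "\<forall>j\<in>{1..i}. wt j > 0" "w \<ge> 0"
  shows "pmf (sampler wt val i w) s = (if s \<in> optset wt val i w then 1 / real (Ctab wt val i w) else 0)"
  using assms
proof (induction i arbitrary: w s)
  case 0
  then have "optset wt val 0 w = {{}}" unfolding optset_def by auto
  then show ?case using 0 by (simp add: indicator_def)
next
  case (Suc i)
  have posi: "\<forall>j\<in>{1..i}. wt j > 0" using Suc.prems by auto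
  note IH = Suc.IH[OF posi]
  show ?case
  proof (cases "w = 0")
    case True
    have "Ctab wt val (Suc i) 0 = 1" using optset_card[OF Suc.prems(1), of val 0] optset_zero[OF Suc.prems(1)] by simp
    then show ?thesis using True optset_zero[OF Suc.prems(1)] by (simp add: indicator_def)
  next
    case False
    then have wpos: "w > 0" and w0: "w \<ge> 0" using Suc.prems(2) by auto
    have nle: "\<not> w \<le> 0" using wpos by simp
    define a where "a = Vtab wt val i w"
    define b where "b = Vtab wt val i (w - wt (Suc i)) + ereal (real_of_int (val (Suc i)))"
    define M where "M = Vtab wt val (Suc i) w"
    define A where "A = optset wt val i w"
    define B where "B = optset wt val i (w - wt (Suc i))"
    define C1 where "C1 = Ctab wt val i w"
    define C2 where "C2 = Ctab wt val i (w - wt (Suc i))"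
    define C where "C = Ctab wt val (Suc i) w"
    have V: "M = max a b" unfolding M_def a_def b_def using w0 by simp
    have nA: "Suc i \<notin> t" if "t \<in> A" for t using optset_sub[OF that[unfolded A_def]] by auto
    have nB: "Suc i \<notin> t" if "t \<in> B" for t using optset_sub[OF that[unfolded B_def]] by auto
    have oc: "s \<in> optset wt val (Suc i) w \<longleftrightarrow>
      (Suc i \<notin> s \<and> s \<in> A \<and> a = M) \<or> (Suc i \<in> s \<and> s - {Suc i} \<in> B \<and> b = M)" for s
      using opt_char[OF Suc.prems(1) w0, of s val] unfolding a_def b_def M_def A_def B_def .
    have ctab: "C = (if a = b then C1 + C2 else if a > b then C1 else C2)"
      unfolding C_def C1_def C2_def a_def b_def using w0 by (simp add: Let_def)
    have C1pos: "C1 > 0" unfolding C1_def using Ctab_pos[OF posi w0] .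
    have IH1: "pmf (sampler wt val i w) t = (if t \<in> A then 1 / real C1 else 0)" for t
      unfolding A_def C1_def using IH[OF w0] .
    have hs: "sampler wt val (Suc i) w =
      (if wt (Suc i) \<le> w \<and> M = a \<and> a = b
       then bind_pmf (bernoulli_pmf (real C2 / real C))
             (\<lambda>b. if b then map_pmf (insert (Suc i)) (sampler wt val i (w - wt (Suc i)))
                  else sampler wt val i w)
       else if M > a
       then map_pmf (insert (Suc i)) (sampler wt val i (w - wt (Suc i)))
       else sampler wt val i w)"
      unfolding M_def a_def b_def C2_def C_def by (simp only: sampler.simps nle if_False)
    have afin: "a \<noteq> -\<infinity>"
      using A2[OF posi w0, of val] unfolding a_def by auto
    show ?thesis
    proof (cases "wt (Suc i) \<le> w \<and> M = a \<and> a = b")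
      case True
      then have w0': "w - wt (Suc i) \<ge> 0" and aM: "a = M" and bM: "b = M" and ab: "a = b" by auto
      have C2pos: "C2 > 0" unfolding C2_def using Ctab_pos[OF posi w0'] .
      have CC: "C = C1 + C2" using ctab ab by simp
      have IH2: "pmf (sampler wt val i (w - wt (Suc i))) t = (if t \<in> B then 1 / real C2 else 0)" for t
        unfolding B_def C2_def using IH[OF w0'] .
      have q0: "0 \<le> real C2 / real C" and q1: "real C2 / real C \<le> 1" using CC C2pos by (auto simp: divide_le_eq_1)
      have p: "pmf (sampler wt val (Suc i) w) s =
         pmf (map_pmf (insert (Suc i)) (sampler wt val i (w - wt (Suc i)))) s * (real C2 / real C)
         + pmf (sampler wt val i w) s * (1 - real C2 / real C)"
        unfolding hs using True q0 q1 by (simp add: pmf_bind)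
      show ?thesis
      proof (cases "Suc i \<in> s")
        case True
        have "s \<notin> A" "s \<notin> B" using True nA nB by auto
        then have "pmf (sampler wt val (Suc i) w) s = (if s - {Suc i} \<in> B then 1 / real C2 else 0) * (real C2 / real C)"
          unfolding p pmf_map_insert IH1 IH2 using True by simp
        moreover have "s \<in> optset wt val (Suc i) w \<longleftrightarrow> s - {Suc i} \<in> B" using oc True bM by auto
        ultimately show ?thesis using C2pos unfolding C_def[symmetric] by simp
      next
        case False
        then have "pmf (sampler wt val (Suc i) w) s = (if s \<in> A then 1 / real C1 else 0) * (1 - real C2 / real C)"
          unfolding p pmf_map_insert IH1 IH2 by simp
        moreover have "s \<in> optset wt val (Suc i) w \<longleftrightarrow> s \<in> A" using oc False aM by auto
        moreover have "1 / real C1 * (1 - real C2 / real C) = 1 / real C"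
          using C1pos C2pos CC by (simp add: field_simps)
        ultimately show ?thesis unfolding C_def[symmetric] by simp
      qed
    next
      case ncond: False
      show ?thesis
      proof (cases "M > a")
        case True
        then have bM: "b = M" and aM: "a \<noteq> M" and ba: "b > a" using V by (auto simp: max_def split: if_splits)
        have w0': "w - wt (Suc i) \<ge> 0"
        proof (rule ccontr)
          assume "\<not> w - wt (Suc i) \<ge> 0"
          then have "Vtab wt val i (w - wt (Suc i)) = -\<infinity>" by (intro Vtab_neg) simp
          then have "b = -\<infinity>" unfolding b_def by simp
          with ba show False by simp
        qed
        have CC: "C = C2" using ctab ba by auto
        have IH2: "pmf (sampler wt val i (w - wt (Suc i))) t = (if t \<in> B then 1 / real C2 else 0)" for t
          unfolding B_def C2_def using IH[OF w0'] .
        have p: "pmf (sampler wt val (Suc i) w) s = pmf (map_pmf (insert (Suc i)) (sampler wt val i (w - wt (Suc i)))) s"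
          unfolding hs if_not_P[OF ncond] if_P[OF True] ..
        have "s \<notin> B" if "Suc i \<in> s" using that nB by auto
        then have "pmf (sampler wt val (Suc i) w) s = (if Suc i \<in> s \<and> s - {Suc i} \<in> B then 1 / real C2 else 0)"
          unfolding p pmf_map_insert IH2 by auto
        moreover have "s \<in> optset wt val (Suc i) w \<longleftrightarrow> Suc i \<in> s \<and> s - {Suc i} \<in> B" using oc aM bM by auto
        ultimately show ?thesis unfolding C_def[symmetric] CC by simp
      next
        case False
        then have aM: "M = a" using V by (auto simp: max_def split: if_splits)
        have ba: "b \<noteq> a"
        proof (cases "wt (Suc i) \<le> w")
          case True
          then show ?thesis using ncond aM by auto
        next
          case False
          then have "Vtab wt val i (w - wt (Suc i)) = -\<infinity>" by (intro Vtab_neg) simp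
          then have "b = -\<infinity>" unfolding b_def by simp
          with afin show ?thesis by simp
        qed
        then have "b < a" using V aM by (metis max.cobounded2 order_le_neq_trans)
        then have CC: "C = C1" using ctab by auto
        have p: "pmf (sampler wt val (Suc i) w) s = pmf (sampler wt val i w) s"
          unfolding hs if_not_P[OF ncond] if_not_P[OF False] ..
        moreover have "s \<in> optset wt val (Suc i) w \<longleftrightarrow> s \<in> A" using oc aM ba nA by auto
        ultimately show ?thesis unfolding C_def[symmetric] CC IH1 by simp
      qed
    qed
  qed
qed

lemma opt_sols_eq:
  assumes pos: "\<forall>j\<in>{1..n}. wt j > 0" and W0: "W \<ge> 0"
  shows "opt_sols n wt val W = optset wt val n W"
proof -
  let ?F = "feasible n wt W"
  obtain t where t: "t \<subseteq> {1..n}" "(\<Sum>j\<in>t. wt j) \<le> W"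
    "ereal (real_of_int (\<Sum>j\<in>t. val j)) = Vtab wt val n W"
    using A2[OF pos W0, of val] by blast
  have tF: "t \<in> ?F" using t unfolding feasible_def by auto
  have le: "(\<Sum>j\<in>s. val j) \<le> (\<Sum>j\<in>t. val j)" if "s \<in> ?F" for s
  proof -
    have "ereal (real_of_int (\<Sum>j\<in>s. val j)) \<le> Vtab wt val n W"
      using that A1[OF pos] unfolding feasible_def by blast
    then show ?thesis using t(3) by (metis ereal_less_eq(3) of_int_le_iff)
  qed
  have finF: "finite ?F"
    by (rule finite_subset[of _ "Pow {1..n}"]) (auto simp: feasible_def)
  have vm: "vmax n wt val W = (\<Sum>j\<in>t. val j)"
    unfolding vmax_def using finF tF le by (intro Max_eqI) auto
  show ?thesis
    unfolding opt_sols_def optset_def feasible_def vm using t(3)[symmetric]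
    by (auto simp del: of_int_sum)
qed

theorem theorem2:
  fixes n :: nat and W :: int and s :: "nat set" and wt val :: "nat \<Rightarrow> int"
  assumes "W > 0"
    and "\<forall>i\<in>{1..n}. wt i > 0"
    and "s \<in> opt_sols n wt val W"
  shows "pmf (sampler wt val n W) s = 1 / real (card (opt_sols n wt val W))"
proof -
  have W0: "W \<ge> 0" using assms(1) by simp
  have eq: "opt_sols n wt val W = optset wt val n W" using opt_sols_eq[OF assms(2) W0] .
  show ?thesis
    using sampler_pmf[OF assms(2) W0, of val s] assms(3) optset_card[OF assms(2), of val W]
    unfolding eq by simp
qed

end
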